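(* For every set of formulas $\Gamma$ and every formula $\alpha$: $\Gamma\vdash_{L_1^2}\alpha$ if and only if $\Gamma\vDash_{\mathcal{M}_1^2}\alpha$.
   Context: Formulas are built from a countable set of propositional variables using unary $\neg,\circ$ and binary $\land,\lor,\to$; $\circ^0\alpha=\alpha$, $\circ^{m+1}\alpha=\circ(\circ^m\alpha)$, $\alpha\leftrightarrow\beta:=(\alpha\to\beta)\land(\beta\to\alpha)$. mbC is the Hilbert calculus with the axiom schemas of a standard axiomatization of positive classical propositional logic in $\land,\lor,\to$, plus (TND) $\alpha\lor\neg\alpha$ and (bc1) $\circ\alpha\to(\alpha\to(\neg\alpha\to\beta))$, with modus ponens as only rule; mbCciw is mbC plus (ciw) $\circ\alpha\lor(\alpha\land\neg\alpha)$; $L_1^0$ is mbCciw plus $\circ\circ\circ\alpha$; $L_1^1$ is $L_1^0$ plus $\neg\neg\alpha\to\alpha$ and $\alpha\to\neg\neg\alpha$; $L_1^2$ is $L_1^1$ plus $\neg\circ\neg\alpha\leftrightarrow\neg\circ\alpha$. $\Gamma\vdash_L\alpha$ means derivability in $L$. Semantics: with Boolean operations $\land,\lor,\to,\sim$ on $\{0,1\}$, let $\mathbb{B}_1^0=\{x\in\{0,1\}^3: x_1\lor x_2=1,\ x_3\lor\sim(x_1\land x_2)=1\}$. The multialgebra $\mathcal{B}_1^2$ on $\mathbb{B}_1^0$ has $x\# y=\{z\in\mathbb{B}_1^0: z_1=x_1\# y_1\}$ for $\#\in\{\land,\lor,\to\}$, $\neg x=\{(x_2,x_1,x_3)\}$,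 $\circ x=\{(\sim(x_1\land x_2),x_3,x_3\land\sim(x_1\land x_2))\}$. $D_1^0=\{x:x_1=1\}$, $\mathcal{M}_1^2=(\mathcal{B}_1^2,D_1^0)$. Valuations over $\mathcal{M}_1^2$ are maps $h$ from formulas to $\mathbb{B}_1^0$ with $h(\alpha\#\beta)\in h(\alpha)\#h(\beta)$, $h(\neg\alpha)\in\neg h(\alpha)$, $h(\circ\alpha)\in\circ h(\alpha)$; $\Gamma\vDash_{\mathcal{M}_1^2}\alpha$ iff every valuation $h$ with $h[\Gamma]\subseteq D_1^0$ has $h(\alpha)\in D_1^0$. *)

theory Defs
  imports Main
begin

datatype fm =
    Var nat
  | Neg fm
  | Circ fm
  | Conj fm fm
  | Disj fm fm
  | Imp fm fm

definition Iff :: "fm \<Rightarrow> fm \<Rightarrow> fm" where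
  "Iff a b = Conj (Imp a b) (Imp b a)"

inductive pos_ax :: "fm \<Rightarrow> bool" where
  Ax1: "pos_ax (Imp a (Imp b a))"
| Ax2: "pos_ax (Imp (Imp a b) (Imp (Imp a (Imp b c)) (Imp a c)))"
| Ax3: "pos_ax (Imp a (Imp b (Conj a b)))"
| Ax4: "pos_ax (Imp (Conj a b) a)"
| Ax5: "pos_ax (Imp (Conj a b) b)"
| Ax6: "pos_ax (Imp a (Disj a b))"
| Ax7: "pos_ax (Imp b (Disj a b))"
| Ax8: "pos_ax (Imp (Imp a c) (Imp (Imp b c) (Imp (Disj a b) c)))"
| Ax9: "pos_ax (Disj a (Imp a b))"

inductive mbC_ax :: "fm \<Rightarrow> bool" where
  pos: "pos_ax a \<Longrightarrow> mbC_ax a"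
| TND: "mbC_ax (Disj a (Neg a))"
| bc1: "mbC_ax (Imp (Circ a) (Imp a (Imp (Neg a) b)))"

inductive L12_ax :: "fm \<Rightarrow> bool" where
  mbC: "mbC_ax a \<Longrightarrow> L12_ax a"
| ciw: "L12_ax (Disj (Circ a) (Conj a (Neg a)))"
| ccc: "L12_ax (Circ (Circ (Circ a)))"
| cf: "L12_ax (Imp (Neg (Neg a)) a)"
| ce: "L12_ax (Imp a (Neg (Neg a)))"
| negcirc: "L12_ax (Iff (Neg (Circ (Neg a))) (Neg (Circ a)))"

inductive derivable_L12 :: "fm set \<Rightarrow> fm \<Rightarrow> bool" where
  premise: "a \<in> \<Gamma> \<Longrightarrow> derivable_L12 \<Gamma> a"
| axiom: "L12_ax a \<Longrightarrow> derivable_L12 \<Gamma> a"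
| mp: "derivable_L12 \<Gamma> a \<Longrightarrow> derivable_L12 \<Gamma> (Imp a b) \<Longrightarrow> derivable_L12 \<Gamma> b"

type_synonym snap = "bool \<times> bool \<times> bool"

definition B10 :: "snap set" where
  "B10 = {(x1, x2, x3). (x1 \<or> x2) \<and> (x3 \<or> \<not> (x1 \<and> x2))}"

definition D10 :: "snap set" where
  "D10 = {x \<in> B10. fst x}"

definition mconj :: "snap \<Rightarrow> snap \<Rightarrow> snap set" where
  "mconj x y = {z \<in> B10. fst z = (fst x \<and> fst y)}"
definition mdisj :: "snap \<Rightarrow> snap \<Rightarrow> snap set" where
  "mdisj x y = {z \<in> B10. fst z = (fst x \<or> fst y)}"
definition mimp :: "snap \<Rightarrow> snap \<Rightarrow> snap set" where
  "mimp x y = {z \<in> B10. fst z = (fst x \<longrightarrow> fst y)}"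
definition mneg :: "snap \<Rightarrow> snap set" where
  "mneg x = (case x of (x1, x2, x3) \<Rightarrow> {(x2, x1, x3)})"
definition mcirc :: "snap \<Rightarrow> snap set" where
  "mcirc x = (case x of (x1, x2, x3) \<Rightarrow>
     {(\<not> (x1 \<and> x2), x3, x3 \<and> \<not> (x1 \<and> x2))})"

definition valuation_M12 :: "(fm \<Rightarrow> snap) \<Rightarrow> bool" where
  "valuation_M12 h \<longleftrightarrow>
     (\<forall>a. h a \<in> B10) \<and>
     (\<forall>a b. h (Conj a b) \<in> mconj (h a) (h b)) \<and>
     (\<forall>a b. h (Disj a b) \<in> mdisj (h a) (h b)) \<and>
     (\<forall>a b. h (Imp a b) \<in> mimp (h a) (h b)) \<and>
     (\<forall>a. h (Neg a) \<in> mneg (h a)) \<and>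
     (\<forall>a. h (Circ a) \<in> mcirc (h a))"

definition entails_M12 :: "fm set \<Rightarrow> fm \<Rightarrow> bool" where
  "entails_M12 \<Gamma> a \<longleftrightarrow>
     (\<forall>h. valuation_M12 h \<longrightarrow> h ` \<Gamma> \<subseteq> D10 \<longrightarrow> h a \<in> D10)"

end

theory Submission
  imports Defs
begin

abbreviation D where "D \<equiv> derivable_L12"

lemma ax_pos: "pos_ax a \<Longrightarrow> D G a"
  by (intro derivable_L12.axiom L12_ax.mbC mbC_ax.pos)

lemma mono_D: "D G a \<Longrightarrow> G \<subseteq> H \<Longrightarrow> D H a"
  by (induction rule: derivable_L12.induct) (auto intro: derivable_L12.intros)

lemma mp2: "D G (Imp a (Imp b c)) \<Longrightarrow> D G a \<Longrightarrow> D G b \<Longrightarrow> D G c"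
  by (meson derivable_L12.mp)

lemma self_imp: "D G (Imp a a)"
proof -
  have "D G (Imp (Imp a (Imp a a)) (Imp (Imp a (Imp (Imp a a) a)) (Imp a a)))"
    by (rule ax_pos) (rule pos_ax.Ax2)
  moreover have "D G (Imp a (Imp a a))" by (rule ax_pos) (rule pos_ax.Ax1)
  moreover have "D G (Imp a (Imp (Imp a a) a))" by (rule ax_pos) (rule pos_ax.Ax1)
  ultimately show ?thesis by (rule mp2)
qed

lemma deduction: "D (insert b G) a \<Longrightarrow> D G (Imp b a)"
proof (induction "insert b G" a rule: derivable_L12.induct)
  case (premise a)
  then show ?case
  proof
    assume "a = b" then show ?thesis using self_imp by simp
  next
    assume "a \<in> G"
    then show ?thesis
      by (meson derivable_L12.mp derivable_L12.premise ax_pos pos_ax.Ax1)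
  qed
next
  case (axiom a)
  then show ?case
    by (meson derivable_L12.mp derivable_L12.axiom ax_pos pos_ax.Ax1)
next
  case (mp a c)
  have "D G (Imp (Imp b a) (Imp (Imp b (Imp a c)) (Imp b c)))"
    by (rule ax_pos) (rule pos_ax.Ax2)
  then show ?case using mp mp2 by blast
qed

lemma compact_chain:
  "D S a \<Longrightarrow> S \<subseteq> \<Union>C \<Longrightarrow> C \<noteq> {} \<Longrightarrow> (\<forall>x\<in>C. \<forall>y\<in>C. x \<subseteq> y \<or> y \<subseteq> x)
   \<Longrightarrow> \<exists>c\<in>C. D c a"
proof (induction rule: derivable_L12.induct)
  case (premise a G)
  then obtain c where "c \<in> C" "a \<in> c" by blast
  then show ?case by (auto intro: derivable_L12.premise)
next
  case (axiom a G)
  then show ?case by (auto intro: derivable_L12.axiom)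
next
  case (mp G a b)
  then obtain c1 c2 where c: "c1 \<in> C" "c2 \<in> C" "D c1 a" "D c2 (Imp a b)" by blast
  show ?case
  proof (cases "c1 \<subseteq> c2")
    case True
    then show ?thesis using c mono_D derivable_L12.mp by blast
  next
    case False
    then have "c2 \<subseteq> c1" using mp.prems c by blast
    then show ?thesis using c mono_D derivable_L12.mp by blast
  qed
qed

lemma val_B: "valuation_M12 h \<Longrightarrow> h a \<in> B10"
  by (simp add: valuation_M12_def)
lemma val_conj: "valuation_M12 h \<Longrightarrow> fst (h (Conj a b)) = (fst (h a) \<and> fst (h b))"
  by (simp add: valuation_M12_def mconj_def)
lemma val_disj: "valuation_M12 h \<Longrightarrow> fst (h (Disj a b)) = (fst (h a) \<or> fst (h b))"
  by (simp add: valuation_M12_def mdisj_def)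
lemma val_imp: "valuation_M12 h \<Longrightarrow> fst (h (Imp a b)) = (fst (h a) \<longrightarrow> fst (h b))"
  by (simp add: valuation_M12_def mimp_def)
lemma val_neg: "valuation_M12 h \<Longrightarrow> h (Neg a) = (fst (snd (h a)), fst (h a), snd (snd (h a)))"
  unfolding valuation_M12_def mneg_def
  by (metis (no_types, lifting) case_prod_conv prod.collapse singletonD)
lemma val_circ: "valuation_M12 h \<Longrightarrow> h (Circ a) =
   (\<not> (fst (h a) \<and> fst (snd (h a))), snd (snd (h a)),
    snd (snd (h a)) \<and> \<not> (fst (h a) \<and> fst (snd (h a))))"
  unfolding valuation_M12_def mcirc_def
  by (metis (no_types, lifting) case_prod_conv prod.collapse singletonD)

lemma B_props: "x \<in> B10 \<Longrightarrow> (fst x \<or> fst (snd x)) \<and> (snd (snd x) \<or> \<not> (fst x \<and> fst (snd x)))"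
  by (auto simp: B10_def)

lemma sound_ax: "L12_ax a \<Longrightarrow> valuation_M12 h \<Longrightarrow> fst (h a)"
proof (induction rule: L12_ax.induct)
  case (mbC a)
  then show ?case
  proof (induction rule: mbC_ax.induct)
    case (pos a)
    then show ?case by (induction rule: pos_ax.induct) (auto simp: val_imp val_conj val_disj)
  next
    case (TND a)
    then show ?case using B_props[OF val_B] by (auto simp: val_disj val_neg)
  next
    case (bc1 a b)
    then show ?case by (auto simp: val_imp val_neg val_circ)
  qed
next
  case (ciw a)
  then show ?case by (auto simp: val_disj val_conj val_neg val_circ)
next
  case (ccc a)
  then show ?case by (auto simp: val_circ)
next
  case (cf a)
  then show ?case by (auto simp: val_imp val_neg)
next
  case (ce a)
  then show ?case by (auto simp: val_imp val_neg)
next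
  case (negcirc a)
  then show ?case by (auto simp: Iff_def val_conj val_imp val_neg val_circ)
qed

lemma sound_aux: "D G a \<Longrightarrow> valuation_M12 h \<Longrightarrow> h ` G \<subseteq> D10 \<Longrightarrow> h a \<in> D10"
proof (induction rule: derivable_L12.induct)
  case (premise a G)
  then show ?case by auto
qed (auto simp: D10_def val_B sound_ax val_imp)

lemma soundness: "D G a \<Longrightarrow> entails_M12 G a"
  unfolding entails_M12_def using sound_aux by blast

definition sat :: "fm set \<Rightarrow> fm \<Rightarrow> bool" where
  "sat M c \<longleftrightarrow> \<not> D M c \<and> (\<forall>b. b \<notin> M \<longrightarrow> D (insert b M) c)"

lemma sat_closed: assumes "sat M c" "D M b" shows "b \<in> M"
proof (rule ccontr)
  assume "b \<notin> M"
  then have "D M (Imp b c)" using assms(1) deduction unfolding sat_def by blast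
  then have "D M c" using assms(2) derivable_L12.mp by blast
  then show False using assms(1) unfolding sat_def by blast
qed

lemma sat_ax: "sat M c \<Longrightarrow> L12_ax b \<Longrightarrow> b \<in> M"
  using sat_closed derivable_L12.axiom by blast

lemma sat_pos: "sat M c \<Longrightarrow> pos_ax b \<Longrightarrow> b \<in> M"
  using sat_closed ax_pos by blast

lemma sat_mp: "sat M c \<Longrightarrow> Imp a b \<in> M \<Longrightarrow> a \<in> M \<Longrightarrow> b \<in> M"
  using sat_closed derivable_L12.mp derivable_L12.premise by blast

lemma sat_mp2: "sat M c \<Longrightarrow> Imp a (Imp b d) \<in> M \<Longrightarrow> a \<in> M \<Longrightarrow> b \<in> M \<Longrightarrow> d \<in> M"
  using sat_mp by blast

lemma sat_conj: "sat M c \<Longrightarrow> Conj a b \<in> M \<longleftrightarrow> a \<in> M \<and> b \<in> M"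
  by (meson pos_ax.Ax3 pos_ax.Ax4 pos_ax.Ax5 sat_mp sat_mp2 sat_pos)

lemma sat_disj: assumes "sat M c" shows "Disj a b \<in> M \<longleftrightarrow> a \<in> M \<or> b \<in> M"
proof
  assume d: "Disj a b \<in> M"
  show "a \<in> M \<or> b \<in> M"
  proof (rule ccontr)
    assume "\<not> (a \<in> M \<or> b \<in> M)"
    then have "D M (Imp a c)" "D M (Imp b c)" using assms deduction unfolding sat_def by blast+
    moreover have "D M (Imp (Imp a c) (Imp (Imp b c) (Imp (Disj a b) c)))"
      by (rule ax_pos) (rule pos_ax.Ax8)
    ultimately have "D M (Imp (Disj a b) c)" using mp2 by blast
    then have "D M c" using d derivable_L12.mp derivable_L12.premise by blast
    then show False using assms unfolding sat_def by blast
  qed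
next
  assume "a \<in> M \<or> b \<in> M"
  then show "Disj a b \<in> M"
    by (meson assms pos_ax.Ax6 pos_ax.Ax7 sat_mp sat_pos)
qed

lemma sat_imp: assumes "sat M c" shows "Imp a b \<in> M \<longleftrightarrow> (a \<in> M \<longrightarrow> b \<in> M)"
proof
  assume "Imp a b \<in> M" then show "a \<in> M \<longrightarrow> b \<in> M" using assms sat_mp by blast
next
  assume h: "a \<in> M \<longrightarrow> b \<in> M"
  have "Disj a (Imp a b) \<in> M" using assms sat_pos pos_ax.Ax9 by blast
  then have "a \<in> M \<or> Imp a b \<in> M" using assms sat_disj by blast
  then show "Imp a b \<in> M"
    by (meson assms h pos_ax.Ax1 sat_mp sat_pos)
qed

lemma sat_tnd: "sat M c \<Longrightarrow> a \<in> M \<or> Neg a \<in> M"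
  using sat_disj sat_ax L12_ax.mbC mbC_ax.TND by blast

lemma sat_bc: assumes "sat M c" "Circ a \<in> M" "a \<in> M" "Neg a \<in> M" shows False
proof -
  have "Imp (Circ a) (Imp a (Imp (Neg a) c)) \<in> M"
    using assms sat_ax L12_ax.mbC mbC_ax.bc1 by blast
  then have "D M c" using assms sat_mp derivable_L12.premise by blast
  then show False using assms unfolding sat_def by blast
qed

lemma sat_ciw: "sat M c \<Longrightarrow> Circ a \<in> M \<or> (a \<in> M \<and> Neg a \<in> M)"
  using sat_disj sat_conj sat_ax L12_ax.ciw by blast

lemma sat_nn: "sat M c \<Longrightarrow> Neg (Neg a) \<in> M \<longleftrightarrow> a \<in> M"
  using sat_mp sat_ax L12_ax.cf L12_ax.ce by blast

lemma sat_nc: "sat M c \<Longrightarrow> Neg (Circ (Neg a)) \<in> M \<longleftrightarrow> Neg (Circ a) \<in> M"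
  using sat_mp sat_conj sat_ax L12_ax.negcirc unfolding Iff_def by blast

lemma sat_ccc: "sat M c \<Longrightarrow> Circ (Circ (Circ a)) \<in> M"
  using sat_ax L12_ax.ccc by blast

definition hM :: "fm set \<Rightarrow> fm \<Rightarrow> snap" where
  "hM M b = (b \<in> M, Neg b \<in> M, Neg (Circ b) \<in> M)"

lemma hM_B: assumes "sat M c" shows "hM M b \<in> B10"
proof -
  have "Neg (Circ b) \<in> M" if "b \<in> M" "Neg b \<in> M"
    using assms that sat_bc sat_tnd by blast
  then show ?thesis using sat_tnd[OF assms, of b] by (auto simp: B10_def hM_def)
qed

lemma hM_val: assumes "sat M c" shows "valuation_M12 (hM M)"
proof -
  have circ: "hM M (Circ a) \<in> mcirc (hM M a)" for a
  proof -
    have 1: "Circ a \<in> M \<longleftrightarrow> \<not> (a \<in> M \<and> Neg a \<in> M)"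
      using assms sat_bc sat_ciw by blast
    have 2: "Neg (Circ (Circ a)) \<in> M \<longleftrightarrow> Neg (Circ a) \<in> M \<and> Circ a \<in> M"
    proof
      assume n: "Neg (Circ (Circ a)) \<in> M"
      have "Circ (Circ a) \<notin> M" using n sat_ccc[OF assms, of a] sat_bc[OF assms] by blast
      then show "Neg (Circ a) \<in> M \<and> Circ a \<in> M" using sat_ciw[OF assms, of "Circ a"] by blast
    next
      assume "Neg (Circ a) \<in> M \<and> Circ a \<in> M"
      then have "Circ (Circ a) \<notin> M" using sat_bc[OF assms] by blast
      then show "Neg (Circ (Circ a)) \<in> M" using sat_tnd[OF assms] by blast
    qed
    show ?thesis using 1 2 by (auto simp: mcirc_def hM_def)
  qed
  have cj: "hM M (Conj a b) \<in> mconj (hM M a) (hM M b)" for a b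
    using hM_B[OF assms, of "Conj a b"] sat_conj[OF assms] by (simp add: mconj_def hM_def)
  have dj: "hM M (Disj a b) \<in> mdisj (hM M a) (hM M b)" for a b
    using hM_B[OF assms, of "Disj a b"] sat_disj[OF assms] by (simp add: mdisj_def hM_def)
  have ij: "hM M (Imp a b) \<in> mimp (hM M a) (hM M b)" for a b
    using hM_B[OF assms, of "Imp a b"] sat_imp[OF assms] by (simp add: mimp_def hM_def)
  have ng: "hM M (Neg a) \<in> mneg (hM M a)" for a
    using sat_nn[OF assms] sat_nc[OF assms] by (simp add: mneg_def hM_def)
  show ?thesis unfolding valuation_M12_def
    using hM_B[OF assms] circ cj dj ij ng by simp
qed

lemma lindenbaum: assumes "\<not> D G c" shows "\<exists>M. G \<subseteq> M \<and> sat M c"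
proof -
  let ?A = "{S. G \<subseteq> S \<and> \<not> D S c}"
  have "\<exists>M\<in>?A. \<forall>X\<in>?A. M \<subseteq> X \<longrightarrow> X = M"
  proof (rule subset_Zorn_nonempty)
    show "?A \<noteq> {}" using assms by blast
  next
    fix C assume ne: "C \<noteq> {}" and ch: "subset.chain ?A C"
    have sub: "C \<subseteq> ?A" using ch unfolding subset.chain_def by blast
    have cmp: "\<forall>x\<in>C. \<forall>y\<in>C. x \<subseteq> y \<or> y \<subseteq> x"
      using ch unfolding subset.chain_def by blast
    have "G \<subseteq> \<Union>C" using ne sub by blast
    moreover have "\<not> D (\<Union>C) c"
      using compact_chain[of "\<Union>C" c C] ne cmp sub by blast
    ultimately show "\<Union>C \<in> ?A" by blast
  qed
  then obtain M where M: "G \<subseteq> M" "\<not> D M c" and mx: "\<forall>X\<in>?A. M \<subseteq> X \<longrightarrow> X = M" by blast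
  have "D (insert b M) c" if "b \<notin> M" for b
    using mx M that by blast
  then show ?thesis using M unfolding sat_def by blast
qed

lemma completeness: assumes "entails_M12 G a" shows "D G a"
proof (rule ccontr)
  assume "\<not> D G a"
  then obtain M where M: "G \<subseteq> M" "sat M a" using lindenbaum by blast
  have "hM M ` G \<subseteq> D10" using M hM_B[OF M(2)] by (auto simp: D10_def hM_def)
  then have "hM M a \<in> D10" using assms hM_val[OF M(2)] unfolding entails_M12_def by blast
  then have "a \<in> M" by (simp add: D10_def hM_def)
  then show False using M(2) derivable_L12.premise unfolding sat_def by blast
qed

theorem theorem10:
  shows "derivable_L12 \<Gamma> \<alpha> \<longleftrightarrow> entails_M12 \<Gamma> \<alpha>"
  using soundness completeness by blast

end
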